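(* Let $\Lambda$ be a row-finite $k$-graph with no sinks and no sources such that $\Lambda^0$ is finite. If the system $(\Lambda,\mathbb{Z}^k,d)$ is cofinal, then $\Lambda$ is primitive.
   Context: A $k$-graph is a countable category $\Lambda$ with a functor $d:\Lambda\to\mathbb{N}^k$ with unique factorisation. $\Lambda^n=d^{-1}(n)$, $\Lambda^0$ = vertices, $uXv=\{\lambda\in X:r(\lambda)=u,s(\lambda)=v\}$. Row-finite: $v\Lambda^n$ finite; no sources: $v\Lambda^n\ne\emptyset$ for $n\neq0$; no sinks: $\Lambda^nv\ne\emptyset$ for $n\ne0$. For $m,n\in\mathbb{N}^k$, $m>n$ means $m_i>n_i$ for all $i$. $\Lambda$ is primitive if there is $N\in\mathbb{N}^k$, $N>0$, with $u\Lambda^Nv\ne\emptyset$ for all $u,v\in\Lambda^0$. Regarding $d$ as a functor into the group $\mathbb{Z}^k$, the system $(\Lambda,\mathbb{Z}^k,d)$ is cofinal if for all $v,w\in\Lambda^0$ and $a,b\in\mathbb{Z}^k$ there is $N\in\mathbb{N}^k$ such that for every $\alpha\in w\Lambda^N$ there is $\beta\in v\Lambda s(\alpha)$ with $a+d(\beta)=b+d(\alpha)$. *)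

theory Defs
  imports Main "HOL-Library.Countable_Set"
begin

text \<open>Elements of N^k are represented as functions nat => nat vanishing at
  indices >= k; elements of Z^k as functions nat => int vanishing at indices >= k.\<close>

definition natvec :: "nat \<Rightarrow> (nat \<Rightarrow> nat) set" where
  "natvec k = {n. \<forall>i\<ge>k. n i = 0}"

definition intvec :: "nat \<Rightarrow> (nat \<Rightarrow> int) set" where
  "intvec k = {a. \<forall>i\<ge>k. a i = 0}"

text \<open>A small category is given by its set of morphisms Mor, range and source maps
  r, s (whose values are the identity morphisms), and a composition cmp
  (cmp l m = l m, defined when s l = r m).\<close>

definition is_kgraph ::
  "nat \<Rightarrow> 'a set \<Rightarrow> ('a \<Rightarrow> 'a) \<Rightarrow> ('a \<Rightarrow> 'a) \<Rightarrow> ('a \<Rightarrow> 'a \<Rightarrow> 'a) \<Rightarrow> ('a \<Rightarrow> nat \<Rightarrow> nat) \<Rightarrow> bool"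
where
  "is_kgraph k Mor r s cmp d \<longleftrightarrow>
     countable Mor \<and>
     (\<forall>l\<in>Mor. r l \<in> Mor \<and> s l \<in> Mor \<and>
        r (r l) = r l \<and> s (r l) = r l \<and> r (s l) = s l \<and> s (s l) = s l) \<and>
     (\<forall>l\<in>Mor. cmp (r l) l = l \<and> cmp l (s l) = l) \<and>
     (\<forall>l\<in>Mor. \<forall>m\<in>Mor. s l = r m \<longrightarrow>
        cmp l m \<in> Mor \<and> r (cmp l m) = r l \<and> s (cmp l m) = s m) \<and>
     (\<forall>l\<in>Mor. \<forall>m\<in>Mor. \<forall>n\<in>Mor. s l = r m \<and> s m = r n \<longrightarrow>
        cmp (cmp l m) n = cmp l (cmp m n)) \<and>
     (\<forall>l\<in>Mor. d l \<in> natvec k) \<and>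
     (\<forall>l\<in>Mor. d (r l) = (\<lambda>_. 0)) \<and>
     (\<forall>l\<in>Mor. \<forall>m\<in>Mor. s l = r m \<longrightarrow> d (cmp l m) = (\<lambda>i. d l i + d m i)) \<and>
     (\<forall>l\<in>Mor. \<forall>m\<in>natvec k. \<forall>n\<in>natvec k. d l = (\<lambda>i. m i + n i) \<longrightarrow>
        (\<exists>!p. fst p \<in> Mor \<and> snd p \<in> Mor \<and> s (fst p) = r (snd p) \<and>
               cmp (fst p) (snd p) = l \<and> d (fst p) = m \<and> d (snd p) = n))"

definition vertices :: "'a set \<Rightarrow> ('a \<Rightarrow> nat \<Rightarrow> nat) \<Rightarrow> 'a set" where
  "vertices Mor d = {l\<in>Mor. d l = (\<lambda>_. 0)}"

definition row_finite where
  "row_finite k Mor r d \<longleftrightarrow>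
     (\<forall>v\<in>vertices Mor d. \<forall>n\<in>natvec k. finite {l\<in>Mor. r l = v \<and> d l = n})"

definition no_sources where
  "no_sources k Mor r d \<longleftrightarrow>
     (\<forall>v\<in>vertices Mor d. \<forall>n\<in>natvec k. n \<noteq> (\<lambda>_. 0) \<longrightarrow> {l\<in>Mor. r l = v \<and> d l = n} \<noteq> {})"

definition no_sinks where
  "no_sinks k Mor s d \<longleftrightarrow>
     (\<forall>v\<in>vertices Mor d. \<forall>n\<in>natvec k. n \<noteq> (\<lambda>_. 0) \<longrightarrow> {l\<in>Mor. s l = v \<and> d l = n} \<noteq> {})"

definition primitive where
  "primitive k Mor r s d \<longleftrightarrow>
     (\<exists>N\<in>natvec k. (\<forall>i<k. N i > 0) \<and>
        (\<forall>u\<in>vertices Mor d. \<forall>v\<in>vertices Mor d. \<exists>l\<in>Mor. r l = u \<and> s l = v \<and> d l = N))"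

definition kg_cofinal where
  "kg_cofinal k Mor r s d \<longleftrightarrow>
     (\<forall>v\<in>vertices Mor d. \<forall>w\<in>vertices Mor d. \<forall>a\<in>intvec k. \<forall>b\<in>intvec k.
        \<exists>N\<in>natvec k. \<forall>\<alpha>\<in>Mor. r \<alpha> = w \<and> d \<alpha> = N \<longrightarrow>
          (\<exists>\<beta>\<in>Mor. r \<beta> = v \<and> s \<beta> = s \<alpha> \<and>
             (\<lambda>i. a i + int (d \<beta> i)) = (\<lambda>i. b i + int (d \<alpha> i))))"

end

theory Submission
  imports Defs
begin

lemma KG:
  assumes "is_kgraph k Mor r s cmp d"
  shows KG_rs: "\<And>l. l\<in>Mor \<Longrightarrow> r l \<in> Mor \<and> s l \<in> Mor \<and>
        r (r l) = r l \<and> s (r l) = r l \<and> r (s l) = s l \<and> s (s l) = s l"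
   and KG_id: "\<And>l. l\<in>Mor \<Longrightarrow> cmp (r l) l = l \<and> cmp l (s l) = l"
   and KG_cmp: "\<And>l m. l\<in>Mor \<Longrightarrow> m\<in>Mor \<Longrightarrow> s l = r m \<Longrightarrow>
        cmp l m \<in> Mor \<and> r (cmp l m) = r l \<and> s (cmp l m) = s m"
   and KG_dr: "\<And>l. l\<in>Mor \<Longrightarrow> d (r l) = (\<lambda>_. 0)"
   and KG_dcmp: "\<And>l m. l\<in>Mor \<Longrightarrow> m\<in>Mor \<Longrightarrow> s l = r m \<Longrightarrow> d (cmp l m) = (\<lambda>i. d l i + d m i)"
   and KG_uf: "\<And>l m n. l\<in>Mor \<Longrightarrow> m\<in>natvec k \<Longrightarrow> n\<in>natvec k \<Longrightarrow> d l = (\<lambda>i. m i + n i) \<Longrightarrow>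
        (\<exists>!p. fst p \<in> Mor \<and> snd p \<in> Mor \<and> s (fst p) = r (snd p) \<and>
               cmp (fst p) (snd p) = l \<and> d (fst p) = m \<and> d (snd p) = n)"
  using assms unfolding is_kgraph_def by blast+

lemma vert_s:
  assumes K: "is_kgraph k Mor r s cmp d" and v: "v \<in> vertices Mor d"
  shows "s v = v"
proof -
  have vM: "v \<in> Mor" and dv: "d v = (\<lambda>_. 0)" using v by (auto simp: vertices_def)
  have z: "(\<lambda>_. 0::nat) \<in> natvec k" by (simp add: natvec_def)
  have dv': "d v = (\<lambda>i. (\<lambda>_. 0::nat) i + (\<lambda>_. 0::nat) i)" using dv by simp
  from KG_uf[OF K vM z z dv'] have U: "\<exists>!p. fst p \<in> Mor \<and> snd p \<in> Mor \<and> s (fst p) = r (snd p) \<and>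
               cmp (fst p) (snd p) = v \<and> d (fst p) = (\<lambda>_. 0) \<and> d (snd p) = (\<lambda>_. 0)"
    by simp
  have rv: "r v \<in> Mor" "s (r v) = r v" "cmp (r v) v = v" "d (r v) = (\<lambda>_. 0)"
    using KG_rs[OF K vM] KG_id[OF K vM] KG_dr[OF K vM] by auto
  have sv: "s v \<in> Mor" "r (s v) = s v" "cmp v (s v) = v"
    using KG_rs[OF K vM] KG_id[OF K vM] by auto
  have "d (s v) = d (r (s v))" using sv by simp
  also have "\<dots> = (\<lambda>_. 0)" using KG_dr[OF K sv(1)] sv by simp
  finally have dsv: "d (s v) = (\<lambda>_. 0)" .
  have "(r v, v) = (v, s v)"
    using U rv sv dsv dv vM by (metis fst_conv snd_conv)
  thus ?thesis by simp
qed

lemma inteq: "((\<lambda>i. int (f i)) = (\<lambda>i. int (g i))) = (f = g)"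
  by (auto simp: fun_eq_iff)

definition PP where
  "PP Mor r s d u w N \<longleftrightarrow> (\<forall>\<alpha>\<in>Mor. r \<alpha> = w \<and> d \<alpha> = N \<longrightarrow>
     (\<exists>\<beta>\<in>Mor. r \<beta> = u \<and> s \<beta> = s \<alpha> \<and> d \<beta> = d \<alpha>))"

lemma PP_mono:
  assumes K: "is_kgraph k Mor r s cmp d" and P: "PP Mor r s d u w N"
    and N: "N \<in> natvec k" and N': "N' \<in> natvec k" and le: "\<And>i. N i \<le> N' i"
  shows "PP Mor r s d u w N'"
  unfolding PP_def
proof (intro ballI impI)
  fix \<alpha> assume aM: "\<alpha> \<in> Mor" and a: "r \<alpha> = w \<and> d \<alpha> = N'"
  define n where "n = (\<lambda>i. N' i - N i)"
  have n: "n \<in> natvec k" using N N' by (auto simp: natvec_def n_def)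
  have da: "d \<alpha> = (\<lambda>i. N i + n i)" using a le by (auto simp: n_def)
  from KG_uf[OF K aM N n da] obtain p where p: "fst p \<in> Mor" "snd p \<in> Mor" "s (fst p) = r (snd p)"
     "cmp (fst p) (snd p) = \<alpha>" "d (fst p) = N" "d (snd p) = n"
    by blast
  have comp: "r (cmp (fst p) (snd p)) = r (fst p)" "s (cmp (fst p) (snd p)) = s (snd p)"
    using KG_cmp[OF K p(1-3)] by auto
  have "r (fst p) = w" using comp p(4) a by simp
  with P p obtain b1 where b1: "b1 \<in> Mor" "r b1 = u" "s b1 = s (fst p)" "d b1 = N"
    unfolding PP_def by force
  have b: "cmp b1 (snd p) \<in> Mor" "r (cmp b1 (snd p)) = u" "s (cmp b1 (snd p)) = s (snd p)"
     "d (cmp b1 (snd p)) = (\<lambda>i. d b1 i + d (snd p) i)"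
    using KG_cmp[OF K b1(1) p(2)] KG_dcmp[OF K b1(1) p(2)] b1 p by auto
  show "\<exists>\<beta>\<in>Mor. r \<beta> = u \<and> s \<beta> = s \<alpha> \<and> d \<beta> = d \<alpha>"
    by (rule bexI[of _ "cmp b1 (snd p)"]) (use b b1 p comp da in auto)
qed

theorem theorem7p1:
  fixes k :: nat and Mor :: "'a set" and r s :: "'a \<Rightarrow> 'a"
    and cmp :: "'a \<Rightarrow> 'a \<Rightarrow> 'a" and d :: "'a \<Rightarrow> nat \<Rightarrow> nat"
  assumes "is_kgraph k Mor r s cmp d"
    and "row_finite k Mor r d"
    and "no_sinks k Mor s d"
    and "no_sources k Mor r d"
    and "finite (vertices Mor d)"
    and "kg_cofinal k Mor r s d"
  shows "primitive k Mor r s d"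
proof -
  note K = assms(1)
  define V where "V = vertices Mor d"
  have z: "(\<lambda>_. 0::int) \<in> intvec k" by (simp add: intvec_def)
  have ex: "\<forall>x\<in>V \<times> V. \<exists>N. N \<in> natvec k \<and> PP Mor r s d (fst x) (snd x) N"
  proof
    fix x assume x: "x \<in> V \<times> V"
    have xv: "fst x \<in> vertices Mor d" "snd x \<in> vertices Mor d" using x V_def by auto
    have C: "\<exists>N\<in>natvec k. \<forall>\<alpha>\<in>Mor. r \<alpha> = snd x \<and> d \<alpha> = N \<longrightarrow>
          (\<exists>\<beta>\<in>Mor. r \<beta> = fst x \<and> s \<beta> = s \<alpha> \<and> d \<beta> = d \<alpha>)"
      using bspec[OF bspec[OF bspec[OF bspec[OF assms(6)[unfolded kg_cofinal_def] xv(1)] xv(2)] z] z]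
      by (simp add: inteq)
    then obtain N where N: "N \<in> natvec k" and "PP Mor r s d (fst x) (snd x) N"
      unfolding PP_def by blast
    with N show "\<exists>N. N \<in> natvec k \<and> PP Mor r s d (fst x) (snd x) N" by blast
  qed
  from bchoice[OF ex] obtain F where F0: "\<forall>x\<in>V \<times> V. F x \<in> natvec k \<and> PP Mor r s d (fst x) (snd x) (F x)"
    by (elim exE) (rule that)
  have F: "F x \<in> natvec k \<and> PP Mor r s d (fst x) (snd x) (F x)" if "x \<in> V \<times> V" for x
    by (rule bspec[OF F0 that])
  define M where "M = 1 + (\<Sum>x\<in>V \<times> V. \<Sum>i<k. F x i)"
  define N' where "N' = (\<lambda>i. if i < k then M else 0)"
  have fin: "finite (V \<times> V)" using assms(5) V_def by simp
  have N': "N' \<in> natvec k" by (simp add: N'_def natvec_def)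
  have le: "F x i \<le> N' i" if x: "x \<in> V \<times> V" for x i
  proof (cases "i < k")
    case True
    have "F x i \<le> (\<Sum>i<k. F x i)" using True by (intro member_le_sum) auto
    also have "\<dots> \<le> (\<Sum>x\<in>V \<times> V. \<Sum>i<k. F x i)" using x fin by (intro member_le_sum) auto
    finally show ?thesis using True by (simp add: N'_def M_def)
  next
    case False
    then show ?thesis using F[OF x] by (simp add: natvec_def)
  qed
  have PN: "PP Mor r s d u w N'" if "u \<in> V" "w \<in> V" for u w
  proof -
    have uw: "(u,w) \<in> V \<times> V" using that by simp
    have "F (u,w) \<in> natvec k" "PP Mor r s d u w (F (u,w))" using F[OF uw] by simp_all
    then show ?thesis using PP_mono[OF K _ _ N' le[OF uw]] by blast
  qed
  show ?thesis
    unfolding primitive_def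
  proof (intro bexI[OF _ N'] conjI ballI allI impI)
    fix i assume "i < k" thus "0 < N' i" by (simp add: N'_def M_def)
  next
    fix u v assume u: "u \<in> vertices Mor d" and v: "v \<in> vertices Mor d"
    have vM: "v \<in> Mor" and dv: "d v = (\<lambda>_. 0)" using v by (auto simp: vertices_def)
    obtain \<alpha> where a: "\<alpha> \<in> Mor" "s \<alpha> = v" "d \<alpha> = N'"
    proof (cases "N' = (\<lambda>_. 0)")
      case True
      have "s v = v" by (rule vert_s[OF K v])
      then show ?thesis using that[of v] vM dv True by simp
    next
      case False
      have "{l\<in>Mor. s l = v \<and> d l = N'} \<noteq> {}"
        using assms(3)[unfolded no_sinks_def] N' v False by blast
      then obtain l where "l \<in> Mor" "s l = v" "d l = N'" by blast
      then show ?thesis by (rule that)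
    qed
    have w: "r \<alpha> \<in> V" using KG_rs[OF K a(1)] KG_dr[OF K a(1)] unfolding V_def vertices_def by auto
    have uV: "u \<in> V" using u V_def by simp
    have "\<exists>\<beta>\<in>Mor. r \<beta> = u \<and> s \<beta> = s \<alpha> \<and> d \<beta> = d \<alpha>"
      using PN[OF uV w, unfolded PP_def] a(1) a(3) by blast
    then show "\<exists>l\<in>Mor. r l = u \<and> s l = v \<and> d l = N'"
      using a by simp
  qed
qed

end
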